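(* Let $\varphi,\psi$ be Denjoy counterexamples with rotation numbers $\alpha,\beta$ such that $1,\alpha,\beta$ are rationally independent, and with Cantor minimal sets $\mathcal{Q}_1,\mathcal{Q}_2\subset\mathbb{T}^1$ respectively. Suppose $x_0\in\mathcal{Q}_{1,\mathrm{irr}}$, $y_0\in\mathcal{Q}_{2,\mathrm{irr}}$, closed intervals $J_1,J_2$ with endpoints in $\mathcal{Q}_{1,\mathrm{irr}}$, $\mathcal{Q}_{2,\mathrm{irr}}$ and midpoints $x_0,y_0$, and constants $C_1,C_2>0$ are such that every component $I$ of $\mathbb{T}^1\setminus\mathcal{Q}_1$ contained in $J_1$ satisfies $|I|\le C_1 d(x_0,x_I)^2$ and every component $I$ of $\mathbb{T}^1\setminus\mathcal{Q}_2$ contained in $J_2$ satisfies $|I|\le C_2 d(y_0,y_I)^2$ ($x_I,y_I$ midpoints). Let $f=\varphi\times\psi:\mathbb{T}^2\to\mathbb{T}^2$ and $z_0=(x_0,y_0)$. Then every open circular sector in $\mathbb{T}^2$ with vertex $z_0$, any radius $r>0$ (small enough that the sector is embedded), and opening angle in $(0,\pi)$ intersects $(\mathcal{Q}_{1,\mathrm{irr}}\times\mathcal{Q}_{2,\mathrm{irr}})\setminus\mathcal{O}_f(z_0)$.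
   Context: $\mathbb{T}^1=\mathbb{R}/\mathbb{Z}$ with metric $d$, $|I|$ the length of an interval; $\mathbb{T}^2=\mathbb{T}^1\times\mathbb{T}^1$. A Denjoy counterexample is an orientation-preserving circle homeomorphism with irrational rotation number that is not transitive; its unique minimal set is a Cantor set. For a Cantor set $\mathcal{Q}\subset\mathbb{T}^1$, $\mathcal{Q}_{\mathrm{irr}}$ is $\mathcal{Q}$ minus the endpoints of the components of $\mathbb{T}^1\setminus\mathcal{Q}$. $\mathcal{O}_f(z_0)=\{f^n(z_0):n\in\mathbb{Z}\}$. (Note $\mathcal{Q}_{1,\mathrm{irr}}\times\mathcal{Q}_{2,\mathrm{irr}}$ is the regular set of the semi-conjugacy of $f$ to the translation by $(\alpha,\beta)$.) *)

theory Defs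
  imports "HOL-Analysis.Analysis"
begin

text \<open>The circle T^1 = R/Z is handled through lifts: points of T^1 are
represented by reals, subsets of T^1 by Z-periodic subsets of R, and an orientation-preserving
circle homeomorphism by a lift F : R -> R (continuous, strictly increasing, F(x+1) = F x + 1).\<close>

definition periodic_set :: "real set \<Rightarrow> bool" where
  "periodic_set S \<longleftrightarrow> (\<forall>x. x \<in> S \<longleftrightarrow> x + 1 \<in> S)"

definition circle_homeo_lift :: "(real \<Rightarrow> real) \<Rightarrow> bool" where
  "circle_homeo_lift F \<longleftrightarrow> continuous_on UNIV F \<and> strict_mono F \<and> (\<forall>x. F (x + 1) = F x + 1)"

definition has_rotation_number :: "(real \<Rightarrow> real) \<Rightarrow> real \<Rightarrow> bool" where
  "has_rotation_number F \<alpha> \<longleftrightarrow> (\<lambda>n. (F ^^ n) 0 / real n) \<longlonglongrightarrow> \<alpha>"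

definition circle_transitive :: "(real \<Rightarrow> real) \<Rightarrow> bool" where
  "circle_transitive F \<longleftrightarrow>
     (\<forall>U V. open U \<and> open V \<and> U \<noteq> {} \<and> V \<noteq> {} \<longrightarrow>
        (\<exists>(n::nat) (k::int). (F ^^ n) ` U \<inter> (\<lambda>x. x + of_int k) ` V \<noteq> {}))"

definition denjoy_counterexample :: "(real \<Rightarrow> real) \<Rightarrow> real \<Rightarrow> bool" where
  "denjoy_counterexample F \<alpha> \<longleftrightarrow>
     circle_homeo_lift F \<and> has_rotation_number F \<alpha> \<and> \<alpha> \<notin> \<rat> \<and> \<not> circle_transitive F"

definition minimal_set :: "(real \<Rightarrow> real) \<Rightarrow> real set \<Rightarrow> bool" where
  "minimal_set F Q \<longleftrightarrow> Q \<noteq> {} \<and> closed Q \<and> periodic_set Q \<and> F ` Q = Q \<and>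
     (\<forall>S. S \<subseteq> Q \<and> S \<noteq> {} \<and> closed S \<and> periodic_set S \<and> F ` S = S \<longrightarrow> S = Q)"

definition irr_part :: "real set \<Rightarrow> real set" where
  "irr_part Q = {x \<in> Q. \<forall>a b. {a<..<b} \<in> components (- Q) \<longrightarrow> x \<noteq> a \<and> x \<noteq> b}"

definition iter_int :: "('a \<Rightarrow> 'a) \<Rightarrow> int \<Rightarrow> 'a \<Rightarrow> 'a" where
  "iter_int F n = (if n \<ge> 0 then F ^^ nat n else inv F ^^ nat (- n))"

definition orbit2 :: "(real \<Rightarrow> real) \<Rightarrow> (real \<Rightarrow> real) \<Rightarrow> real \<times> real \<Rightarrow> (real \<times> real) set" where
  "orbit2 F G z = {(iter_int F n (fst z) + of_int k, iter_int G n (snd z) + of_int m) | n k m. True}"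

definition sector :: "real \<times> real \<Rightarrow> real \<Rightarrow> real \<Rightarrow> real \<Rightarrow> (real \<times> real) set" where
  "sector z r t0 \<theta> = {(fst z + \<rho> * cos t, snd z + \<rho> * sin t) | \<rho> t.
      0 < \<rho> \<and> \<rho> < r \<and> t0 < t \<and> t < t0 + \<theta>}"

end

theory Submission
  imports Defs
begin


lemma gap_component:
  fixes Q :: "real set"
  assumes "c \<in> Q" "d \<in> Q" "c < d" "{c<..<d} \<inter> Q = {}"
  shows "{c<..<d} \<in> components (- Q)"
  unfolding in_components_maximal
proof (intro conjI allI impI)
  show "{c<..<d} \<noteq> {}" using assms by auto
  show "{c<..<d} \<subseteq> - Q" using assms by auto
  show "connected {c<..<d}" by simp
  fix D assume D: "D \<noteq> {} \<and> {c<..<d} \<subseteq> D \<and> D \<subseteq> - Q \<and> connected D"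
  have iv: "is_interval D" using D is_interval_connected_1 by blast
  have "(c+d)/2 \<in> {c<..<d}" using assms(3) by auto
  hence m: "(c+d)/2 \<in> D" using D by blast
  show "D = {c<..<d}"
  proof
    show "D \<subseteq> {c<..<d}"
    proof
      fix y assume y: "y \<in> D"
      show "y \<in> {c<..<d}"
      proof (rule ccontr)
        assume "y \<notin> {c<..<d}"
        hence "y \<le> c \<or> y \<ge> d" by auto
        thus False
        proof
          assume "y \<le> c"
          moreover have "c \<le> (c+d)/2" using assms(3) by simp
          ultimately have "c \<in> D" using iv y m unfolding is_interval_1 by blast
          thus False using D assms by auto
        next
          assume "y \<ge> d"
          moreover have "(c+d)/2 \<le> d" using assms(3) by simp
          ultimately have "d \<in> D" using iv y m unfolding is_interval_1 by blast
          thus False using D assms by auto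
        qed
      qed
    qed
  qed (use D in auto)
qed

lemma irr_in: "x \<in> irr_part Q \<Longrightarrow> x \<in> Q"
  unfolding irr_part_def by auto

lemma irr_right:
  fixes Q :: "real set"
  assumes "closed Q" "periodic_set Q" "x0 \<in> irr_part Q" "l > 0"
  shows "\<exists>q\<in>Q. x0 < q \<and> q < x0 + l"
proof (rule ccontr)
  assume H: "\<not> ?thesis"
  define l' where "l' = min l 1"
  have l': "0 < l'" "l' \<le> l" "l' \<le> 1" using assms(4) by (auto simp: l'_def)
  have x0Q: "x0 \<in> Q" using assms(3) by (rule irr_in)
  have x1: "x0 + 1 \<in> Q" using assms(2) x0Q unfolding periodic_set_def by blast
  define T where "T = Q \<inter> {x0 + l'..}"
  have T1: "x0 + 1 \<in> T" using x1 l' by (auto simp: T_def)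
  have Tc: "closed T" using assms(1) by (auto simp: T_def intro: closed_Int)
  have Tb: "bdd_below T" unfolding T_def by (rule bdd_belowI[where m="x0+l'"]) auto
  define d where "d = Inf T"
  have dT: "d \<in> T" unfolding d_def using T1 Tb Tc closed_contains_Inf by blast
  have dgt: "d > x0" using dT l' by (auto simp: T_def)
  have gap: "{x0<..<d} \<inter> Q = {}"
  proof (rule ccontr)
    assume "{x0<..<d} \<inter> Q \<noteq> {}"
    then obtain q where q: "q \<in> Q" "x0 < q" "q < d" by auto
    show False
    proof (cases "q < x0 + l'")
      case True
      have "q < x0 + l" using True l' by linarith
      thus ?thesis using H q by blast
    next
      case False
      hence "q \<in> T" using q by (auto simp: T_def)
      hence "d \<le> q" unfolding d_def using Tb by (rule cInf_lower)
      thus ?thesis using q by simp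
    qed
  qed
  have "{x0<..<d} \<in> components (- Q)"
    using gap_component[OF x0Q _ dgt gap] dT by (auto simp: T_def)
  thus False using assms(3) unfolding irr_part_def by blast
qed

lemma irr_left:
  fixes Q :: "real set"
  assumes "closed Q" "periodic_set Q" "x0 \<in> irr_part Q" "l > 0"
  shows "\<exists>q\<in>Q. x0 - l < q \<and> q < x0"
proof (rule ccontr)
  assume H: "\<not> ?thesis"
  define l' where "l' = min l 1"
  have l': "0 < l'" "l' \<le> l" "l' \<le> 1" using assms(4) by (auto simp: l'_def)
  have x0Q: "x0 \<in> Q" using assms(3) by (rule irr_in)
  have x1: "x0 - 1 \<in> Q" using assms(2) x0Q unfolding periodic_set_def
    by (metis diff_add_cancel)
  define T where "T = Q \<inter> {..x0 - l'}"
  have T1: "x0 - 1 \<in> T" using x1 l' by (auto simp: T_def)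
  have Tc: "closed T" using assms(1) by (auto simp: T_def intro: closed_Int)
  have Tb: "bdd_above T" unfolding T_def by (rule bdd_aboveI[where M="x0-l'"]) auto
  define c where "c = Sup T"
  have cT: "c \<in> T" unfolding c_def using T1 Tb Tc closed_contains_Sup by blast
  have clt: "c < x0" using cT l' by (auto simp: T_def)
  have gap: "{c<..<x0} \<inter> Q = {}"
  proof (rule ccontr)
    assume "{c<..<x0} \<inter> Q \<noteq> {}"
    then obtain q where q: "q \<in> Q" "c < q" "q < x0" by auto
    show False
    proof (cases "x0 - l' < q")
      case True
      have "x0 - l < q" using True l' by linarith
      thus ?thesis using H q by blast
    next
      case False
      hence "q \<in> T" using q by (auto simp: T_def)
      hence "q \<le> c" unfolding c_def using Tb by (rule cSup_upper)
      thus ?thesis using q by simp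
    qed
  qed
  have "{c<..<x0} \<in> components (- Q)"
    using gap_component[OF _ x0Q clt gap] cT by (auto simp: T_def)
  thus False using assms(3) unfolding irr_part_def by blast
qed

lemma limpt_shift:
  fixes Q :: "real set"
  assumes "periodic_set Q" "x islimpt Q" and tt: "t = 1 \<or> t = -1"
  shows "x + t islimpt Q"
proof -
  have P: "q + t \<in> Q" if q: "q \<in> Q" for q
  proof (cases "t = 1")
    case True thus ?thesis using assms(1) q unfolding periodic_set_def by blast
  next
    case False
    hence t: "t = -1" using tt by blast
    have "(q - 1) + 1 \<in> Q" using q by simp
    hence "q - 1 \<in> Q" using assms(1) unfolding periodic_set_def by blast
    thus ?thesis using t by simp
  qed
  show ?thesis unfolding islimpt_approachable
  proof (intro allI impI)
    fix e :: real assume "e > 0"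
    then obtain q where q: "q \<in> Q" "q \<noteq> x" "dist q x < e"
      using assms(2) unfolding islimpt_approachable by blast
    show "\<exists>x'\<in>Q. x' \<noteq> x + t \<and> dist x' (x + t) < e"
      by (rule bexI[where x="q+t"]) (use q P in \<open>auto simp: dist_real_def\<close>)
  qed
qed

lemma perfect_Q:
  fixes Q :: "real set"
  assumes F: "circle_homeo_lift F" and M: "minimal_set F Q" and x0: "x0 \<in> irr_part Q"
  shows "\<forall>x\<in>Q. x islimpt Q"
proof -
  have Qc: "closed Q" and Qp: "periodic_set Q" and FQ: "F ` Q = Q"
    using M unfolding minimal_set_def by auto
  have cont: "continuous_on UNIV F" and sm: "strict_mono F"
    using F unfolding circle_homeo_lift_def by auto
  define S where "S = {x. x islimpt Q}"
  have SQ: "S \<subseteq> Q" using Qc closed_limpt S_def by blast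
  have Sne: "S \<noteq> {}"
  proof -
    have "x0 islimpt Q" unfolding islimpt_approachable
    proof (intro allI impI)
      fix e :: real assume "e > 0"
      then obtain q where "q \<in> Q" "x0 < q" "q < x0 + e" using irr_right[OF Qc Qp x0] by blast
      thus "\<exists>x'\<in>Q. x' \<noteq> x0 \<and> dist x' x0 < e" by (auto simp: dist_real_def)
    qed
    thus ?thesis by (auto simp: S_def)
  qed
  have Sc: "closed S" unfolding S_def by (rule closed_limpts)
  have Sp: "periodic_set S" unfolding periodic_set_def S_def
  proof (intro allI iffI)
    fix x assume "x \<in> {x. x islimpt Q}"
    thus "x + 1 \<in> {x. x islimpt Q}" using limpt_shift[OF Qp, of x 1] by simp
  next
    fix x assume "x + 1 \<in> {x. x islimpt Q}"
    thus "x \<in> {x. x islimpt Q}" using limpt_shift[OF Qp, of "x+1" "-1"] by simp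
  qed
  have fwd: "F x islimpt Q" if xl: "x islimpt Q" for x
    unfolding islimpt_approachable
  proof (intro allI impI)
    fix e :: real assume e: "e > 0"
    have "isCont F x" using cont continuous_on_eq_continuous_at by blast
    then obtain d where d: "d > 0" "\<And>y. dist y x < d \<Longrightarrow> dist (F y) (F x) < e"
      using e unfolding continuous_at_eps_delta by blast
    obtain q where q: "q \<in> Q" "q \<noteq> x" "dist q x < d"
      using xl d unfolding islimpt_approachable by blast
    have "F q \<in> Q" using FQ q by blast
    moreover have "F q \<noteq> F x" using q sm strict_mono_eq by blast
    ultimately show "\<exists>x'\<in>Q. x' \<noteq> F x \<and> dist x' (F x) < e" using d q by blast
  qed
  have bwd: "x islimpt Q" if xl: "F x islimpt Q" for x
    unfolding islimpt_approachable
  proof (intro allI impI)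
    fix e :: real assume e: "e > 0"
    have a: "F (x - e) < F x" "F x < F (x + e)" using sm e by (auto intro: strict_monoD)
    define e' where "e' = min (F x - F (x - e)) (F (x + e) - F x)"
    have "e' > 0" using a by (simp add: e'_def)
    then obtain q where q: "q \<in> Q" "q \<noteq> F x" "dist q (F x) < e'"
      using xl unfolding islimpt_approachable by blast
    obtain p where p: "p \<in> Q" "q = F p" using q FQ by blast
    have "F (x - e) < F p" "F p < F (x + e)" using q p by (auto simp: dist_real_def e'_def)
    hence "x - e < p" "p < x + e" using sm strict_mono_less by blast+
    moreover have "p \<noteq> x" using p q by blast
    ultimately show "\<exists>x'\<in>Q. x' \<noteq> x \<and> dist x' x < e" using p by (auto simp: dist_real_def)
  qed
  have FS: "F ` S = S"
  proof
    show "F ` S \<subseteq> S" using fwd by (auto simp: S_def)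
    show "S \<subseteq> F ` S"
    proof
      fix y assume y: "y \<in> S"
      then obtain x where "x \<in> Q" "y = F x" using SQ FQ by blast
      thus "y \<in> F ` S" using bwd y by (auto simp: S_def)
    qed
  qed
  have "S = Q" using M SQ Sne Sc Sp FS unfolding minimal_set_def by blast
  thus ?thesis by (auto simp: S_def)
qed

lemma perfect_uncountable:
  fixes Q A :: "real set"
  assumes Qc: "closed Q" and P: "\<forall>x\<in>Q. x islimpt Q" and A: "open A" and ne: "A \<inter> Q \<noteq> {}"
  shows "uncountable (A \<inter> Q)"
proof
  assume cA: "countable (A \<inter> Q)"
  define G where "G = (\<lambda>p. Q - {p}) ` (A \<inter> Q)"
  have cG: "countable G" unfolding G_def by (rule countable_image[OF cA])
  have GG: "openin (top_of_set Q) T \<and> Q \<subseteq> closure T" if "T \<in> G" for T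
  proof -
    obtain p where p: "p \<in> A \<inter> Q" "T = Q - {p}" using \<open>T \<in> G\<close> by (auto simp: G_def)
    have o: "openin (top_of_set Q) (Q \<inter> - {p})" by (rule openin_open_Int) (simp add: open_Compl)
    have e: "Q \<inter> - {p} = Q - {p}" by blast
    have o2: "openin (top_of_set Q) (Q - {p})" using o by (simp only: e)
    have c2: "Q \<subseteq> closure (Q - {p})"
    proof
      fix x assume x: "x \<in> Q"
      show "x \<in> closure (Q - {p})"
      proof (cases "x = p")
        case False
        hence "x \<in> Q - {p}" using x by blast
        thus ?thesis by (rule subsetD[OF closure_subset])
      next
        case True
        have "x islimpt Q" using P x by blast
        hence "x \<in> closure (Q - {x})" by (rule islimpt_in_closure[THEN iffD1])
        thus ?thesis using True by simp
      qed
    qed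
    show ?thesis using o2 c2 p(2) by blast
  qed
  have QG: "Q \<subseteq> closure (\<Inter>G)" by (rule Baire[OF Qc cG GG])
  have IG: "\<Inter>G \<subseteq> - A"
  proof
    fix y assume y: "y \<in> \<Inter>G"
    show "y \<in> - A"
    proof
      assume yA: "y \<in> A"
      show False
      proof (cases "y \<in> Q")
        case True
        hence "Q - {y} \<in> G" using yA by (auto simp: G_def)
        thus False using y by blast
      next
        case False
        obtain p where "p \<in> A \<inter> Q" using ne by blast
        hence "Q - {p} \<in> G" by (auto simp: G_def)
        thus False using y False by blast
      qed
    qed
  qed
  have cl: "closure (- A) = - A" by (rule closure_closed) (rule closed_Compl[OF A])
  have "closure (\<Inter>G) \<subseteq> closure (- A)" using IG by (rule closure_mono)
  hence "Q \<subseteq> - A" using QG cl by blast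
  thus False using ne by blast
qed

lemma endpoints_countable:
  fixes Q :: "real set"
  assumes "closed Q"
  shows "countable {x. \<exists>a b. {a<..<b} \<in> components (- Q) \<and> (x = a \<or> x = b)}"
proof -
  have cc: "countable (components (- Q))"
  proof -
    have "components (- Q) \<subseteq> (\<lambda>r. connected_component_set (- Q) r) ` (\<rat> \<inter> - Q)"
    proof
      fix K assume K: "K \<in> components (- Q)"
      then obtain x where x: "x \<in> - Q" "K = connected_component_set (- Q) x"
        using components_iff by blast
      have "open K" using K open_components assms by blast
      have "x \<in> K" using x connected_component_refl by blast
      then obtain e where "e > 0" "ball x e \<subseteq> K" using \<open>open K\<close> open_contains_ball by blast
      then obtain r where r: "r \<in> \<rat>" "x < r" "r < x + e" using Rats_dense_in_real[of x "x+e"] by auto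
      have "r \<in> K" using r \<open>ball x e \<subseteq> K\<close> by (auto simp: dist_real_def)
      hence "r \<in> - Q" using K in_components_subset by blast
      moreover have "K = connected_component_set (- Q) r" using x \<open>r \<in> K\<close> connected_component_eq by metis
      ultimately show "K \<in> (\<lambda>r. connected_component_set (- Q) r) ` (\<rat> \<inter> - Q)" using r by blast
    qed
    thus ?thesis using countable_rat by (meson countable_Int1 countable_image countable_subset)
  qed
  have "{x. \<exists>a b. {a<..<b} \<in> components (- Q) \<and> (x = a \<or> x = b)} \<subseteq> (\<Union>K\<in>components (- Q). {Inf K, Sup K})"
  proof
    fix x assume "x \<in> {x. \<exists>a b. {a<..<b} \<in> components (- Q) \<and> (x = a \<or> x = b)}"
    then obtain a b where ab: "{a<..<b} \<in> components (- Q)" "x = a \<or> x = b" by auto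
    have "a < b" using in_components_nonempty[OF ab(1)] by auto
    hence "x \<in> {Inf {a<..<b}, Sup {a<..<b}}" using ab(2) by simp
    thus "x \<in> (\<Union>K\<in>components (- Q). {Inf K, Sup K})" using ab(1) by blast
  qed
  moreover have "countable (\<Union>K\<in>components (- Q). {Inf K, Sup K})"
    using cc by (intro countable_UN) auto
  ultimately show ?thesis by (rule countable_subset)
qed



lemma arith_gap:
  fixes L e D C eps :: real
  assumes "C > 0" "eps > 0" "0 \<le> e" "e \<le> D" "eps * D \<le> L" "L \<le> C * (e + L/2)^2"
    "L * C \<le> 1/2" "D * C * 4 < eps" "0 < L"
  shows False
proof -
  have h: "2*e^2 + L^2/2 - (e+L/2)^2 = (e - L/2)^2" by (simp add: power2_eq_square algebra_simps)
  have "0 \<le> (e - L/2)^2" by simp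
  hence h1: "(e + L/2)^2 \<le> 2*e^2 + L^2/2" using h by linarith
  have "C * (e + L/2)^2 \<le> C * (2*e^2 + L^2/2)" using h1 assms(1) by (simp add: mult_left_mono)
  also have "\<dots> = 2*(C*e^2) + (L*C)*L/2" by (simp add: power2_eq_square algebra_simps)
  finally have h2: "L \<le> 2*(C*e^2) + (L*C)*L/2" using assms(6) by linarith
  have "(L*C)*L \<le> (1/2)*L" by (rule mult_right_mono[OF assms(7)]) (use assms(9) in simp)
  hence h3: "L \<le> 2*(C*e^2) + L/4" using h2 by linarith
  have "e^2 \<le> D^2" using assms(3,4) by (simp add: power_mono)
  hence "C*e^2 \<le> C*D^2" using assms(1) by (simp add: mult_left_mono)
  hence h4: "L \<le> 8/3*(C*D^2)" using h3 by linarith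
  have D0: "D \<ge> 0" using assms(3,4) by linarith
  show False
  proof (cases "D = 0")
    case True thus False using h4 assms(9) by simp
  next
    case False
    hence Dp: "D > 0" using D0 by linarith
    have "eps * D \<le> (8/3*C*D) * D" using h4 assms(5) by (simp add: power2_eq_square algebra_simps)
    hence "eps \<le> 8/3*C*D" using Dp by (rule mult_right_le_imp_le)
    moreover have "0 \<le> C*D" using assms(1) D0 by simp
    ultimately show False using assms(8) by (simp add: algebra_simps)
  qed
qed

lemma gap_right:
  fixes Q :: "real set"
  assumes Qc: "closed Q" and x0: "x0 \<in> Q" and dp: "\<delta> > 0" and xd: "x0 + \<delta> \<in> Q" and Cp: "C > 0"
    and R: "\<forall>l>0. \<exists>q\<in>Q. x0 < q \<and> q < x0 + l"
    and G: "\<forall>c d. c \<in> Q \<longrightarrow> d \<in> Q \<longrightarrow> c < d \<longrightarrow> {c<..<d} \<inter> Q = {} \<longrightarrow> x0 - \<delta> \<le> c \<longrightarrow> d \<le> x0 + \<delta>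
              \<longrightarrow> d - c \<le> C * \<bar>x0 - (c + d) / 2\<bar>\<^sup>2"
    and ep: "eps > 0"
  shows "\<exists>s0>0. \<forall>a b. x0 \<le> a \<longrightarrow> a < b \<longrightarrow> b - x0 < s0 \<longrightarrow> eps * (b - x0) \<le> b - a \<longrightarrow> {a<..<b} \<inter> Q \<noteq> {}"
proof -
  define l where "l = min \<delta> (1/(2*C))"
  have lp: "l > 0" using dp Cp by (simp add: l_def)
  obtain q where q: "q \<in> Q" "x0 < q" "q < x0 + l" using R lp by blast
  define s0 where "s0 = min (q - x0) (eps/(4*C))"
  have s0p: "s0 > 0" using q ep Cp by (simp add: s0_def)
  show ?thesis
  proof (intro exI[of _ s0] conjI allI impI s0p)
    fix a b assume ab: "x0 \<le> a" "a < b" "b - x0 < s0" "eps * (b - x0) \<le> b - a"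
    show "{a<..<b} \<inter> Q \<noteq> {}"
    proof
      assume E: "{a<..<b} \<inter> Q = {}"
      define T1 where "T1 = Q \<inter> {..a}"
      have T1x: "x0 \<in> T1" using x0 ab by (simp add: T1_def)
      have T1c: "closed T1" using Qc by (simp add: T1_def closed_Int)
      have T1b: "bdd_above T1" unfolding T1_def by (rule bdd_aboveI[where M=a]) auto
      define c where "c = Sup T1"
      have cT: "c \<in> T1" unfolding c_def using T1x T1b T1c closed_contains_Sup by blast
      have cx: "x0 \<le> c" unfolding c_def by (rule cSup_upper[OF T1x T1b])
      define T2 where "T2 = Q \<inter> {b..}"
      have bq: "b \<le> q" using ab(3) by (simp add: s0_def)
      have T2q: "q \<in> T2" using q bq by (simp add: T2_def)
      have T2c: "closed T2" using Qc by (simp add: T2_def closed_Int)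
      have T2b: "bdd_below T2" unfolding T2_def by (rule bdd_belowI[where m=b]) auto
      define d where "d = Inf T2"
      have dT: "d \<in> T2" unfolding d_def using T2q T2b T2c closed_contains_Inf by blast
      have dq: "d \<le> q" unfolding d_def by (rule cInf_lower[OF T2q T2b])
      have cQ: "c \<in> Q" "c \<le> a" using cT by (auto simp: T1_def)
      have dQ: "d \<in> Q" "b \<le> d" using dT by (auto simp: T2_def)
      have cd: "c < d" using cQ dQ ab by linarith
      have gap: "{c<..<d} \<inter> Q = {}"
      proof (rule ccontr)
        assume "{c<..<d} \<inter> Q \<noteq> {}"
        then obtain y where y: "y \<in> Q" "c < y" "y < d" by auto
        show False
        proof (cases "y \<le> a")
          case True
          hence "y \<in> T1" using y by (simp add: T1_def)
          hence "y \<le> c" unfolding c_def using T1b by (rule cSup_upper)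
          thus False using y by linarith
        next
          case False
          show False
          proof (cases "b \<le> y")
            case True
            hence "y \<in> T2" using y by (simp add: T2_def)
            hence "d \<le> y" unfolding d_def using T2b by (rule cInf_lower)
            thus False using y by linarith
          next
            case False
            hence "y \<in> {a<..<b} \<inter> Q" using y \<open>\<not> y \<le> a\<close> by auto
            thus False using E by blast
          qed
        qed
      qed
      have l1: "x0 - \<delta> \<le> c" using cx dp by linarith
      have l2: "d \<le> x0 + \<delta>" using dq q(3) by (simp add: l_def)
      have main: "d - c \<le> C * \<bar>x0 - (c + d) / 2\<bar>\<^sup>2" using G cQ(1) dQ(1) cd gap l1 l2 by blast
      have e1: "(c - x0) + (d - c)/2 = -(x0 - (c+d)/2)" by (simp add: field_simps)
      have eq: "\<bar>x0 - (c + d) / 2\<bar>\<^sup>2 = ((c - x0) + (d - c)/2)^2" unfolding e1 power2_minus power2_abs ..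
      show False
      proof (rule arith_gap[OF Cp ep, of "c - x0" "b - x0" "d - c"])
        show "0 \<le> c - x0" using cx by simp
        show "c - x0 \<le> b - x0" using cQ ab by simp
        show "eps * (b - x0) \<le> d - c" using ab cQ dQ by linarith
        show "d - c \<le> C * (c - x0 + (d - c) / 2)\<^sup>2" using main eq by simp
        have "d - c \<le> l" using dq q cx by linarith
        hence "(d - c) * C \<le> l * C" using Cp by (simp add: mult_right_mono)
        also have "l * C \<le> 1/(2*C) * C" by (rule mult_right_mono) (use Cp in \<open>auto simp: l_def\<close>)
        also have "\<dots> = 1/2" using Cp by simp
        finally show "(d - c) * C \<le> 1/2" .
        have "b - x0 < eps/(4*C)" using ab(3) by (simp add: s0_def)
        thus "(b - x0) * C * 4 < eps" using Cp by (simp add: field_simps)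
        show "0 < d - c" using cd by simp
      qed
    qed
  qed
qed

lemma gap_left:
  fixes Q :: "real set"
  assumes Qc: "closed Q" and x0: "x0 \<in> Q" and dp: "\<delta> > 0" and xd: "x0 - \<delta> \<in> Q" and Cp: "C > 0"
    and L: "\<forall>l>0. \<exists>q\<in>Q. x0 - l < q \<and> q < x0"
    and G: "\<forall>c d. c \<in> Q \<longrightarrow> d \<in> Q \<longrightarrow> c < d \<longrightarrow> {c<..<d} \<inter> Q = {} \<longrightarrow> x0 - \<delta> \<le> c \<longrightarrow> d \<le> x0 + \<delta>
              \<longrightarrow> d - c \<le> C * \<bar>x0 - (c + d) / 2\<bar>\<^sup>2"
    and ep: "eps > 0"
  shows "\<exists>s0>0. \<forall>a b. a < b \<longrightarrow> b \<le> x0 \<longrightarrow> x0 - a < s0 \<longrightarrow> eps * (x0 - a) \<le> b - a \<longrightarrow> {a<..<b} \<inter> Q \<noteq> {}"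
proof -
  define Q' where "Q' = uminus ` Q"
  have mem: "y \<in> Q' \<longleftrightarrow> - y \<in> Q" for y
    unfolding Q'_def by (metis image_iff minus_minus)
  have Q'c: "closed Q'" unfolding Q'_def using Qc by (rule closed_negations)
  have x0': "- x0 \<in> Q'" using x0 mem by simp
  have xd': "- x0 + \<delta> \<in> Q'" using xd mem by simp
  have R': "\<forall>l>0. \<exists>q\<in>Q'. - x0 < q \<and> q < - x0 + l"
  proof (intro allI impI)
    fix l :: real assume "l > 0"
    then obtain q where "q \<in> Q" "x0 - l < q" "q < x0" using L by blast
    thus "\<exists>q\<in>Q'. - x0 < q \<and> q < - x0 + l" using mem by (intro bexI[of _ "-q"]) auto
  qed
  have G': "\<forall>c d. c \<in> Q' \<longrightarrow> d \<in> Q' \<longrightarrow> c < d \<longrightarrow> {c<..<d} \<inter> Q' = {} \<longrightarrow> - x0 - \<delta> \<le> c \<longrightarrow> d \<le> - x0 + \<delta>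
              \<longrightarrow> d - c \<le> C * \<bar>- x0 - (c + d) / 2\<bar>\<^sup>2"
  proof (intro allI impI)
    fix c d assume h: "c \<in> Q'" "d \<in> Q'" "c < d" "{c<..<d} \<inter> Q' = {}" "- x0 - \<delta> \<le> c" "d \<le> - x0 + \<delta>"
    have g: "{-d<..<-c} \<inter> Q = {}"
    proof (rule ccontr)
      assume "{-d<..<-c} \<inter> Q \<noteq> {}"
      then obtain y where "y \<in> Q" "-d < y" "y < -c" by auto
      hence "-y \<in> {c<..<d} \<inter> Q'" using mem by auto
      thus False using h(4) by blast
    qed
    have h1: "-c - -d \<le> C * \<bar>x0 - (-d + -c) / 2\<bar>\<^sup>2"
      using G h mem g by (smt (verit) minus_minus)
    have e: "x0 - (-d + -c) / 2 = -(-x0 - (c+d)/2)" by (simp add: field_simps)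
    have "-c - -d \<le> C * \<bar>-(-x0 - (c+d)/2)\<bar>\<^sup>2" using h1 unfolding e .
    thus "d - c \<le> C * \<bar>- x0 - (c + d) / 2\<bar>\<^sup>2" by (simp only: abs_minus_cancel diff_minus_eq_add)
  qed
  obtain s0 where s0: "s0 > 0" and S: "\<forall>a b. - x0 \<le> a \<longrightarrow> a < b \<longrightarrow> b - - x0 < s0 \<longrightarrow> eps * (b - - x0) \<le> b - a \<longrightarrow> {a<..<b} \<inter> Q' \<noteq> {}"
    using gap_right[OF Q'c x0' dp xd' Cp R' G' ep] by blast
  show ?thesis
  proof (intro exI[of _ s0] conjI allI impI s0)
    fix a b assume ab: "a < b" "b \<le> x0" "x0 - a < s0" "eps * (x0 - a) \<le> b - a"
    have "{-b<..<-a} \<inter> Q' \<noteq> {}" using S ab by (smt (verit))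
    then obtain y where "y \<in> Q'" "-b < y" "y < -a" by auto
    hence "-y \<in> {a<..<b} \<inter> Q" using mem by auto
    thus "{a<..<b} \<inter> Q \<noteq> {}" by blast
  qed
qed

lemma coord:
  fixes F :: "real \<Rightarrow> real" and Q :: "real set"
  assumes F: "circle_homeo_lift F" and M: "minimal_set F Q" and x0: "x0 \<in> irr_part Q"
    and dp: "\<delta> > 0" and xm: "x0 - \<delta> \<in> irr_part Q" and xp: "x0 + \<delta> \<in> irr_part Q" and Cp: "C > 0"
    and G0: "\<forall>a b. {a<..<b} \<in> components (- Q) \<and> {a<..<b} \<subseteq> {x0 - \<delta> .. x0 + \<delta>} \<longrightarrow>
           b - a \<le> C * \<bar>x0 - (a + b) / 2\<bar>\<^sup>2"
    and ep: "0 < et" "et \<le> 1"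
  shows "\<exists>s0>0. \<forall>s c. 0 < s \<longrightarrow> s < s0 \<longrightarrow> \<bar>c - x0\<bar> \<le> s \<longrightarrow>
           uncountable (greaterThanLessThan (c - et * s) (c + et * s) \<inter> irr_part Q)"
proof -
  have Qc: "closed Q" and Qp: "periodic_set Q" using M unfolding minimal_set_def by auto
  have x0Q: "x0 \<in> Q" using x0 by (rule irr_in)
  have G: "\<forall>c d. c \<in> Q \<longrightarrow> d \<in> Q \<longrightarrow> c < d \<longrightarrow> {c<..<d} \<inter> Q = {} \<longrightarrow> x0 - \<delta> \<le> c \<longrightarrow> d \<le> x0 + \<delta>
              \<longrightarrow> d - c \<le> C * \<bar>x0 - (c + d) / 2\<bar>\<^sup>2"
  proof (intro allI impI)
    fix c d assume h: "c \<in> Q" "d \<in> Q" "c < d" "{c<..<d} \<inter> Q = {}" "x0 - \<delta> \<le> c" "d \<le> x0 + \<delta>"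
    have "{c<..<d} \<in> components (- Q)" using gap_component[OF h(1-4)] .
    moreover have "{c<..<d} \<subseteq> {x0 - \<delta> .. x0 + \<delta>}" using h(5,6) by auto
    ultimately show "d - c \<le> C * \<bar>x0 - (c + d) / 2\<bar>\<^sup>2" using G0 by blast
  qed
  have R: "\<forall>l>0. \<exists>q\<in>Q. x0 < q \<and> q < x0 + l" using irr_right[OF Qc Qp x0] by blast
  have L: "\<forall>l>0. \<exists>q\<in>Q. x0 - l < q \<and> q < x0" using irr_left[OF Qc Qp x0] by blast
  obtain s1 where s1: "s1 > 0" and S1: "\<forall>a b. x0 \<le> a \<longrightarrow> a < b \<longrightarrow> b - x0 < s1 \<longrightarrow> et * (b - x0) \<le> b - a \<longrightarrow> {a<..<b} \<inter> Q \<noteq> {}"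
    using gap_right[OF Qc x0Q dp irr_in[OF xp] Cp R G ep(1)] by blast
  obtain s2 where s2: "s2 > 0" and S2: "\<forall>a b. a < b \<longrightarrow> b \<le> x0 \<longrightarrow> x0 - a < s2 \<longrightarrow> et * (x0 - a) \<le> b - a \<longrightarrow> {a<..<b} \<inter> Q \<noteq> {}"
    using gap_left[OF Qc x0Q dp irr_in[OF xm] Cp L G ep(1)] by blast
  have P: "\<forall>x\<in>Q. x islimpt Q" by (rule perfect_Q[OF F M x0])
  have Ec: "countable {x. \<exists>a b. {a<..<b} \<in> components (- Q) \<and> (x = a \<or> x = b)}"
    by (rule endpoints_countable[OF Qc])
  show ?thesis
  proof (intro exI[of _ "min s1 s2 / 2"] conjI allI impI)
    show "0 < min s1 s2 / 2" using s1 s2 by simp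
    fix s c assume s: "0 < s" "s < min s1 s2 / 2" "\<bar>c - x0\<bar> \<le> s"
    define a where "a = c - et * s"
    define b where "b = c + et * s"
    have es: "0 < et * s" using s ep by simp
    have es1: "et * s \<le> s" using s ep by simp
    have ab: "a < b" using es by (simp add: a_def b_def)
    have ne: "{a<..<b} \<inter> Q \<noteq> {}"
    proof (cases "a < x0 \<and> x0 < b")
      case True thus ?thesis using x0Q by auto
    next
      case False
      hence "x0 \<le> a \<or> b \<le> x0" by linarith
      thus ?thesis
      proof
        assume xa: "x0 \<le> a"
        have "b - x0 \<le> 2* s" using s(3) es1 by (simp add: b_def abs_le_iff)
        moreover have "et * (b - x0) \<le> et * (2* s)" using calculation ep by (simp add: mult_left_mono)
        ultimately show ?thesis using S1 xa ab s(2) by (simp add: a_def b_def algebra_simps)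
      next
        assume xb: "b \<le> x0"
        have "x0 - a \<le> 2* s" using s(3) es1 by (simp add: a_def abs_le_iff)
        moreover have "et * (x0 - a) \<le> et * (2* s)" using calculation ep by (simp add: mult_left_mono)
        ultimately show ?thesis using S2 xb ab s(2) by (simp add: a_def b_def algebra_simps)
      qed
    qed
    have U: "uncountable ({a<..<b} \<inter> Q)" by (rule perfect_uncountable[OF Qc P _ ne]) simp
    have sub: "{a<..<b} \<inter> Q \<subseteq> ({a<..<b} \<inter> irr_part Q) \<union> {x. \<exists>a b. {a<..<b} \<in> components (- Q) \<and> (x = a \<or> x = b)}"
      by (auto simp: irr_part_def)
    show "uncountable (greaterThanLessThan (c - et * s) (c + et * s) \<inter> irr_part Q)"
    proof
      assume "countable (greaterThanLessThan (c - et * s) (c + et * s) \<inter> irr_part Q)"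
      hence "countable (({a<..<b} \<inter> irr_part Q) \<union> {x. \<exists>a b. {a<..<b} \<in> components (- Q) \<and> (x = a \<or> x = b)})"
        using Ec by (simp add: a_def b_def)
      hence "countable ({a<..<b} \<inter> Q)" using sub countable_subset by blast
      thus False using U by blast
    qed
  qed
qed



lemma in_sector:
  fixes x y x0 y0 r t0 \<theta> s et :: real
  assumes sp: "0 < s" and sr: "2 * s < r" and tp: "0 < \<theta>" and et: "0 < et" "et \<le> 1/8" "et \<le> \<theta>/16"
    and hx: "\<bar>x - (x0 + s * cos (t0 + \<theta>/2))\<bar> < et * s"
    and hy: "\<bar>y - (y0 + s * sin (t0 + \<theta>/2))\<bar> < et * s"
  shows "(x, y) \<in> sector (x0, y0) r t0 \<theta>"
proof -
  define tm where "tm = t0 + \<theta>/2"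
  define cm where "cm = cos tm"
  define sm where "sm = sin tm"
  have cs: "sm^2 + cm^2 = 1" by (simp add: cm_def sm_def)
  define u where "u = x - x0"
  define v where "v = y - y0"
  define a where "a = u - s * cm"
  define b where "b = v - s * sm"
  have ha: "\<bar>a\<bar> < et * s" using hx by (simp add: a_def u_def cm_def tm_def algebra_simps)
  have hb: "\<bar>b\<bar> < et * s" using hy by (simp add: b_def v_def sm_def tm_def algebra_simps)
  define u' where "u' = u * cm + v * sm"
  define v' where "v' = v * cm - u * sm"
  have ue: "u = s * cm + a" and ve: "v = s * sm + b" by (simp_all add: a_def b_def)
  have "u' = s * (sm^2 + cm^2) + a * cm + b * sm" by (simp add: u'_def ue ve power2_eq_square algebra_simps)
  hence u'e: "u' = s + a * cm + b * sm" using cs by simp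
  have v'e: "v' = b * cm - a * sm" by (simp add: v'_def ue ve algebra_simps)
  have acm: "\<bar>a * cm\<bar> \<le> \<bar>a\<bar>" unfolding abs_mult cm_def by (rule mult_right_le_one_le) auto
  have bsm: "\<bar>b * sm\<bar> \<le> \<bar>b\<bar>" unfolding abs_mult sm_def by (rule mult_right_le_one_le) auto
  have bcm: "\<bar>b * cm\<bar> \<le> \<bar>b\<bar>" unfolding abs_mult cm_def by (rule mult_right_le_one_le) auto
  have asm: "\<bar>a * sm\<bar> \<le> \<bar>a\<bar>" unfolding abs_mult sm_def by (rule mult_right_le_one_le) auto
  have es8: "et * s \<le> s / 8" using et sp by (simp add: mult_right_mono)
  have est: "et * s \<le> \<theta> / 16 * s" using et sp by (simp add: mult_right_mono)
  have u'lo: "u' > 3/4 * s" using u'e acm bsm ha hb es8 by linarith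
  have u'hi: "u' < 5/4 * s" using u'e acm bsm ha hb es8 by linarith
  have v'b: "\<bar>v'\<bar> < 2 * (et * s)" using v'e bcm asm ha hb by linarith
  have u'p: "u' > 0" using u'lo sp by linarith
  define z where "z = v' / u'"
  have "\<theta>/2 * (3/4 * s) < \<theta>/2 * u'" using u'lo tp by simp
  moreover have "\<theta>/16 * s = (\<theta>* s)/16" "\<theta>/2 * (3/4 * s) = 3*(\<theta>* s)/8" by simp_all
  moreover have "\<theta> * s > 0" using tp sp by simp
  ultimately have v'th: "\<bar>v'\<bar> < \<theta>/2 * u'" using v'b est by linarith
  have zth: "\<bar>z\<bar> < \<theta>/2" unfolding z_def abs_divide using v'th u'p by (simp add: pos_divide_less_eq)
  have v'13: "\<bar>v'\<bar> < 1/3 * u'" using v'b es8 u'lo by linarith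
  have z13: "\<bar>z\<bar> < 1/3" unfolding z_def abs_divide using v'13 u'p by (simp add: pos_divide_less_eq)
  define \<phi> where "\<phi> = arctan z"
  have phb: "\<bar>\<phi>\<bar> < \<theta>/2" using abs_arctan_le[of z] zth by (simp add: \<phi>_def)
  define q where "q = sqrt (1 + z^2)"
  have qp: "q > 0" by (simp add: q_def add_pos_nonneg)
  have "1 + z^2 \<le> (1 + \<bar>z\<bar>)^2" by (simp add: power2_eq_square algebra_simps)
  hence "q \<le> sqrt ((1 + \<bar>z\<bar>)^2)" unfolding q_def by (rule real_sqrt_le_mono)
  hence qb: "q \<le> 4/3" using z13 by simp
  define \<rho> where "\<rho> = u' * q"
  have rp: "0 < \<rho>" using u'p qp by (simp add: \<rho>_def)
  have "\<rho> \<le> (5/4 * s) * (4/3)" unfolding \<rho>_def using u'hi u'p qb qp by (intro mult_mono) auto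
  hence rr: "\<rho> < r" using sp sr by linarith
  have rc: "\<rho> * cos \<phi> = u'" using qp by (simp add: \<rho>_def \<phi>_def cos_arctan q_def[symmetric])
  have "\<rho> * sin \<phi> = u' * z" using qp by (simp add: \<rho>_def \<phi>_def sin_arctan q_def[symmetric])
  also have "u' * z = v'" using u'p by (simp add: z_def)
  finally have rs: "\<rho> * sin \<phi> = v'" .
  have X: "x0 + \<rho> * cos (tm + \<phi>) = x"
  proof -
    have "\<rho> * cos (tm + \<phi>) = cm * (\<rho> * cos \<phi>) - sm * (\<rho> * sin \<phi>)"
      by (simp add: cos_add cm_def sm_def algebra_simps)
    also have "\<dots> = u * (sm^2 + cm^2)" unfolding rc rs u'_def v'_def by (simp add: power2_eq_square algebra_simps)
    finally show ?thesis using cs by (simp add: u_def)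
  qed
  have Y: "y0 + \<rho> * sin (tm + \<phi>) = y"
  proof -
    have "\<rho> * sin (tm + \<phi>) = sm * (\<rho> * cos \<phi>) + cm * (\<rho> * sin \<phi>)"
      by (simp add: sin_add cm_def sm_def algebra_simps)
    also have "\<dots> = v * (sm^2 + cm^2)" unfolding rc rs u'_def v'_def by (simp add: power2_eq_square algebra_simps)
    finally show ?thesis using cs by (simp add: v_def)
  qed
  have t1: "t0 < tm + \<phi>" "tm + \<phi> < t0 + \<theta>" using phb by (auto simp: tm_def)
  show ?thesis unfolding sector_def
    using X Y rp rr t1 by fastforce
qed



theorem lemma23:
  fixes F G :: "real \<Rightarrow> real" and \<alpha> \<beta> :: real and Q1 Q2 :: "real set"
    and x0 y0 \<delta>1 \<delta>2 C1 C2 :: real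
  assumes "denjoy_counterexample F \<alpha>" and "denjoy_counterexample G \<beta>"
    and "\<forall>a b c :: int. of_int a + of_int b * \<alpha> + of_int c * \<beta> = 0 \<longrightarrow> a = 0 \<and> b = 0 \<and> c = 0"
    and "minimal_set F Q1" and "minimal_set G Q2"
    and "x0 \<in> irr_part Q1" and "y0 \<in> irr_part Q2"
    and "0 < \<delta>1" and "\<delta>1 < 1/2" and "x0 - \<delta>1 \<in> irr_part Q1" and "x0 + \<delta>1 \<in> irr_part Q1"
    and "0 < \<delta>2" and "\<delta>2 < 1/2" and "y0 - \<delta>2 \<in> irr_part Q2" and "y0 + \<delta>2 \<in> irr_part Q2"
    and "C1 > 0" and "C2 > 0"
    and "\<forall>a b. {a<..<b} \<in> components (- Q1) \<and> {a<..<b} \<subseteq> {x0 - \<delta>1 .. x0 + \<delta>1} \<longrightarrow>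
           b - a \<le> C1 * \<bar>x0 - (a + b) / 2\<bar>\<^sup>2"
    and "\<forall>a b. {a<..<b} \<in> components (- Q2) \<and> {a<..<b} \<subseteq> {y0 - \<delta>2 .. y0 + \<delta>2} \<longrightarrow>
           b - a \<le> C2 * \<bar>y0 - (a + b) / 2\<bar>\<^sup>2"
  shows "\<forall>r t0 \<theta>. 0 < r \<and> 0 < \<theta> \<and> \<theta> < pi \<longrightarrow>
           (\<exists>p \<in> sector (x0, y0) r t0 \<theta>.
              fst p \<in> irr_part Q1 \<and> snd p \<in> irr_part Q2 \<and> p \<notin> orbit2 F G (x0, y0))"
proof (intro allI impI)
  fix r t0 \<theta> :: real
  assume h: "0 < r \<and> 0 < \<theta> \<and> \<theta> < pi"
  have Fh: "circle_homeo_lift F" using assms(1) by (simp add: denjoy_counterexample_def)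
  have Gh: "circle_homeo_lift G" using assms(2) by (simp add: denjoy_counterexample_def)
  define et where "et = min (1/8) (\<theta>/16)"
  have etp: "0 < et" "et \<le> 1" "et \<le> 1/8" "et \<le> \<theta>/16" using h by (auto simp: et_def)
  obtain s1 where s1: "s1 > 0" and S1: "\<forall>s c. 0 < s \<longrightarrow> s < s1 \<longrightarrow> \<bar>c - x0\<bar> \<le> s \<longrightarrow>
           uncountable (greaterThanLessThan (c - et * s) (c + et * s) \<inter> irr_part Q1)"
    using coord[OF Fh assms(4) assms(6) assms(8) assms(10) assms(11) assms(16) assms(18) etp(1,2)] by blast
  obtain s2 where s2: "s2 > 0" and S2: "\<forall>s c. 0 < s \<longrightarrow> s < s2 \<longrightarrow> \<bar>c - y0\<bar> \<le> s \<longrightarrow>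
           uncountable (greaterThanLessThan (c - et * s) (c + et * s) \<inter> irr_part Q2)"
    using coord[OF Gh assms(5) assms(7) assms(12) assms(14) assms(15) assms(17) assms(19) etp(1,2)] by blast
  define s where "s = min (min s1 s2) r / 3"
  have sp: "0 < s" "s < s1" "s < s2" "2 * s < r" using s1 s2 h by (auto simp: s_def)
  define tm where "tm = t0 + \<theta>/2"
  define cx where "cx = x0 + s * cos tm"
  define cy where "cy = y0 + s * sin tm"
  have "s * \<bar>cos tm\<bar> \<le> s" using sp by (intro mult_right_le_one_le) auto
  hence "\<bar>s * cos tm\<bar> \<le> s" using sp by (simp add: abs_mult)
  hence cxb: "\<bar>cx - x0\<bar> \<le> s" by (simp add: cx_def)
  have "s * \<bar>sin tm\<bar> \<le> s" using sp by (intro mult_right_le_one_le) auto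
  hence "\<bar>s * sin tm\<bar> \<le> s" using sp by (simp add: abs_mult)
  hence cyb: "\<bar>cy - y0\<bar> \<le> s" by (simp add: cy_def)
  define X where "X = greaterThanLessThan (cx - et * s) (cx + et * s) \<inter> irr_part Q1"
  define Y where "Y = greaterThanLessThan (cy - et * s) (cy + et * s) \<inter> irr_part Q2"
  have UX: "uncountable X" using S1 sp cxb by (simp add: X_def)
  have UY: "uncountable Y" using S2 sp cyb by (simp add: Y_def)
  then obtain y where yY: "y \<in> Y" by (metis countable_empty ex_in_conv)
  define Orb where "Orb = orbit2 F G (x0, y0)"
  have "Orb \<subseteq> (\<lambda>(n, k, m). (iter_int F n x0 + of_int k, iter_int G n y0 + of_int m)) ` (UNIV :: (int \<times> int \<times> int) set)"
  proof
    fix p assume "p \<in> Orb"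
    then obtain n k m where "p = (iter_int F n x0 + of_int k, iter_int G n y0 + of_int m)"
      unfolding Orb_def orbit2_def by auto
    thus "p \<in> (\<lambda>(n, k, m). (iter_int F n x0 + of_int k, iter_int G n y0 + of_int m)) ` (UNIV :: (int \<times> int \<times> int) set)"
      by (intro image_eqI[of _ _ "(n, k, m)"]) auto
  qed
  hence cO: "countable Orb" by (rule countable_subset) simp
  have "\<exists>x\<in>X. (x, y) \<notin> Orb"
  proof (rule ccontr)
    assume "\<not> ?thesis"
    hence "X \<subseteq> fst ` Orb" by force
    moreover have "countable (fst ` Orb)" using cO by simp
    ultimately show False using UX countable_subset by blast
  qed
  then obtain x where xX: "x \<in> X" and xO: "(x, y) \<notin> Orb" by blast
  have hx: "\<bar>x - (x0 + s * cos (t0 + \<theta>/2))\<bar> < et * s"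
    using xX by (auto simp: X_def cx_def tm_def abs_less_iff)
  have hy: "\<bar>y - (y0 + s * sin (t0 + \<theta>/2))\<bar> < et * s"
    using yY by (auto simp: Y_def cy_def tm_def abs_less_iff)
  have inS: "(x, y) \<in> sector (x0, y0) r t0 \<theta>"
    using in_sector[OF sp(1) sp(4) _ etp(1) etp(3) etp(4) hx hy] h by blast
  show "\<exists>p\<in>sector (x0, y0) r t0 \<theta>. fst p \<in> irr_part Q1 \<and> snd p \<in> irr_part Q2 \<and> p \<notin> orbit2 F G (x0, y0)"
    using inS xX yY xO by (intro bexI[of _ "(x, y)"]) (auto simp: X_def Y_def Orb_def)
qed

end
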